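(* Let $\mathcal{Z}_1$ and $\Theta$ be measurable spaces, $n\ge1$, and let $S=(X_1,\dots,X_n)$ have i.i.d. coordinates in $\mathcal{Z}_1$; let $S'=(X_1',\dots,X_n')$ be an independent copy of $S$. Let $\ell:\Theta\times\mathcal{Z}_1\to[0,\infty)$ be measurable with $\mathbb{E}[\ell(\vartheta,X_1)^2]<\infty$ for every $\vartheta\in\Theta$. Define $L(\vartheta)=\mathbb{E}[\ell(\vartheta,X_1)]$, $\hat L_s(\vartheta)=\frac1n\sum_{k=1}^n\ell(\vartheta,z_k)$ for $s=(z_1,\dots,z_n)$, and for each fixed $\vartheta$ \[ V_\vartheta=\sum_{k=1}^n\mathbb{E}\big[(\hat L_S(\vartheta)-\hat L_{S^{(k)}}(\vartheta))^2\,\big|\,X_1,\dots,X_k\big]. \] Let $\hat p$ be a probability kernel from $\mathcal{Z}_1^n$ to $\Theta$, $p^0$ a probability measure on $\Theta$, and $\theta$ a random element of $\Theta$ whose conditional distribution given $S$ is $\hat p_S$, with $S'$ independent of $(S,\theta)$; assume $\int(\hat L_S(\vartheta)+L(\vartheta))\,\hat p_S(d\vartheta)<\infty$ a.s. Then for every $y>0$ and $x\ge 2$, with probability at least $1-e^{-x}$, \[ \big|\mathbb{E}[\hat L_S(\theta)-L(\theta)\mid S]\big|\le\sqrt{2\big(y+\mathbb{E}[V_\theta\mid S]\big)\Big(\mathrm{KL}(\hat p_S\,\|\,p^0)+x+\frac x2\ln\Big(1+\frac1y\mathbb{E}[V_\theta\mid S]\Big)\Big)}, \] and moreover, almost surely,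 \[ \mathbb{E}[V_\theta\mid S]\le\frac1{n^2}\,\mathbb{E}\Big[\sum_{k=1}^n\big(\ell(\theta,X_k)^2+\ell(\theta,X_k')^2\big)\,\Big|\,S\Big]. \]
   Context: $S^{(k)}$ denotes $S$ with its $k$-th coordinate $X_k$ replaced by $X_k'$. A probability kernel $\hat p$ assigns to each $s$ a probability measure $\hat p_s$ on $\Theta$, measurably in $s$. $V_\theta$ denotes $V_\vartheta$ evaluated at $\vartheta=\theta$, and conditional expectations given $S$ integrate $\theta$ against $\hat p_S$ (and average over $S'$ where it appears); e.g. $\mathbb{E}[V_\theta\mid S]=\int V_\vartheta\,\hat p_S(d\vartheta)$. $\mathrm{KL}(p\,\|\,q)=\int\ln\frac{dp}{dq}\,dp$ if $p\ll q$, and $+\infty$ otherwise. *)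

theory Defs
  imports "HOL-Probability.Probability"
begin

definition KL_div :: "'a measure \<Rightarrow> 'a measure \<Rightarrow> ereal" where
  "KL_div p q =
     (if absolutely_continuous q p then
        enn2ereal (\<integral>\<^sup>+ t. ennreal (max 0 (ln (enn2real (RN_deriv q p t)))) \<partial>p)
        - enn2ereal (\<integral>\<^sup>+ t. ennreal (max 0 (- ln (enn2real (RN_deriv q p t)))) \<partial>p)
      else \<infinity>)"

text \<open>Empirical risk: Lhat l n s th = (1/n) * sum_{k<n} l th (s k).
  Samples s are functions on the index set {..<n} (0-based indices).\<close>
definition Lhat :: "('t \<Rightarrow> 'z \<Rightarrow> real) \<Rightarrow> nat \<Rightarrow> (nat \<Rightarrow> 'z) \<Rightarrow> 't \<Rightarrow> real" where
  "Lhat l n s th = (1 / real n) * (\<Sum>k<n. l th (s k))"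

definition Lpop :: "('t \<Rightarrow> 'z \<Rightarrow> real) \<Rightarrow> 'z measure \<Rightarrow> 't \<Rightarrow> real" where
  "Lpop l D th = (\<integral> z. l th z \<partial>D)"

abbreviation sample_law :: "nat \<Rightarrow> 'z measure \<Rightarrow> (nat \<Rightarrow> 'z) measure" where
  "sample_law n D \<equiv> PiM {..<n} (\<lambda>_. D)"

text \<open>V_th evaluated at S = s (0-based index k corresponds to X_{k+1}):
  V_th = sum_k E[(Lhat_S th - Lhat_{S^(k)} th)^2 | X_0..X_k].
  Given the coordinates s_0..s_k, the unobserved coordinates X_i (i > k) and the
  replacement X_k' are independent with law D; they are realized by the
  coordinates of an independent copy s' (coordinates i > k and coordinate k).
  Nonnegative, so computed as a nonnegative integral.\<close>
definition Vcond :: "('t \<Rightarrow> 'z \<Rightarrow> real) \<Rightarrow> nat \<Rightarrow> 'z measure \<Rightarrow> 't \<Rightarrow> (nat \<Rightarrow> 'z) \<Rightarrow> ennreal" where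
  "Vcond l n D th s =
     (\<Sum>k<n. \<integral>\<^sup>+ s'. ennreal
        ((Lhat l n (\<lambda>i. if i \<le> k then s i else s' i) th
          - Lhat l n ((\<lambda>i. if i \<le> k then s i else s' i)(k := s' k)) th)\<^sup>2)
        \<partial>(sample_law n D))"

end

theory Submission
  imports Defs "HOL-Probability.Probability"
begin

lemma exp_quad_bound: "exp (x - x^2/2) \<le> 1 + x + x^2/(2::real)"
proof -
  define q where "q = (\<lambda>x::real. 1 + x + x^2/2)"
  have qpos: "q t > 0" for t
  proof -
    have "q t = ((t+1)^2 + 1)/2" unfolding q_def by (simp add: power2_eq_square field_simps)
    moreover have "(t+1)^2 + 1 > (0::real)" by (metis add_nonneg_pos zero_less_one zero_le_power2)
    ultimately show ?thesis by simp
  qed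
  define h where "h = (\<lambda>t. ln (q t) - t + t^2/2)"
  have der: "(h has_real_derivative (t * (1 + t/2 + t^2/2) / q t)) (at t)" for t
  proof -
    have "(h has_real_derivative ((1 + t)/ q t - 1 + t)) (at t)"
      unfolding h_def q_def using qpos[of t, unfolded q_def]
      by (auto intro!: derivative_eq_intros simp: power2_eq_square field_simps)
    moreover have "(1 + t)/ q t - 1 + t = t * (1 + t/2 + t^2/2) / q t"
      using qpos[of t] unfolding q_def by (simp add: field_simps power2_eq_square)
    ultimately show ?thesis by simp
  qed
  have pp: "1 + t/2 + t^2/2 > (0::real)" for t
  proof -
    have "1 + t/2 + t^2/2 = ((t+1/2)^2 + 7/4)/2" by (simp add: power2_eq_square field_simps)
    moreover have "(t+1/2)^2 + 7/4 > (0::real)" by (metis add_nonneg_pos zero_le_power2 zero_less_divide_iff zero_less_numeral)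
    ultimately show ?thesis by simp
  qed
  have "h x \<ge> h 0"
  proof (cases "x \<ge> 0")
    case True
    show ?thesis
    proof (rule DERIV_nonneg_imp_nondecreasing[OF True])
      fix t :: real assume "0 \<le> t" "t \<le> x"
      then show "\<exists>y. DERIV h t :> y \<and> y \<ge> 0"
        using der[of t] pp[of t] qpos[of t] by (intro exI[of _ "t * (1 + t/2 + t^2/2) / q t"]) auto
    qed
  next
    case False
    have x0: "x \<le> 0" using False by simp
    show ?thesis
    proof (rule DERIV_nonpos_imp_nonincreasing[OF x0])
      fix t :: real assume "x \<le> t" "t \<le> 0"
      then show "\<exists>y. DERIV h t :> y \<and> y \<le> 0"
        using der[of t] pp[of t] qpos[of t]
        by (intro exI[of _ "t * (1 + t/2 + t^2/2) / q t"]) (auto intro!: divide_nonpos_pos mult_nonpos_nonneg)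
    qed
  qed
  moreover have "h 0 = 0" unfolding h_def q_def by simp
  ultimately have "ln (q x) \<ge> x - x^2/2" unfolding h_def by simp
  then have "exp (x - x^2/2) \<le> exp (ln (q x))" by simp
  also have "\<dots> = q x" using qpos by simp
  finally show ?thesis unfolding q_def .
qed

lemma (in prob_space) exp_mart_step:
  assumes f[measurable]: "f \<in> borel_measurable M" and int1: "integrable M f"
    and int2: "integrable M (\<lambda>z. (f z)\<^sup>2)" and mean: "expectation f = 0"
  shows "(\<integral>\<^sup>+z. ennreal (exp (t * f z - t\<^sup>2 * ((f z)\<^sup>2 + expectation (\<lambda>z. (f z)\<^sup>2)) / 2)) \<partial>M) \<le> 1"
proof -
  define c where "c = expectation (\<lambda>z. (f z)\<^sup>2)"
  define a where "a = t\<^sup>2 * c / 2"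
  define g where "g = (\<lambda>z. exp (- a) * (1 + t * f z + (t * f z)\<^sup>2 / 2))"
  have pt: "exp (t * f z - t\<^sup>2 * ((f z)\<^sup>2 + c) / 2) \<le> g z" for z
  proof -
    have e: "t * f z - t\<^sup>2 * ((f z)\<^sup>2 + c) / 2 = - a + (t * f z - (t * f z)\<^sup>2 / 2)"
      unfolding a_def by (simp add: power_mult_distrib algebra_simps)
    have "exp (t * f z - t\<^sup>2 * ((f z)\<^sup>2 + c) / 2) = exp (- a) * exp (t * f z - (t * f z)\<^sup>2 / 2)"
      unfolding e exp_add ..
    also have "\<dots> \<le> g z"
      unfolding g_def by (rule mult_left_mono[OF exp_quad_bound]) simp
    finally show ?thesis .
  qed
  have nn: "0 \<le> 1 + x + x\<^sup>2 / (2::real)" for x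
    using exp_quad_bound[of x] by (meson exp_ge_zero order_trans)
  have gnn: "0 \<le> g z" for z unfolding g_def using nn[of "t * f z"] by simp
  have intg: "integrable M g"
    unfolding g_def power_mult_distrib using int1 int2 by simp
  have "(\<integral>\<^sup>+z. ennreal (exp (t * f z - t\<^sup>2 * ((f z)\<^sup>2 + c) / 2)) \<partial>M) \<le> (\<integral>\<^sup>+z. ennreal (g z) \<partial>M)"
    by (intro nn_integral_mono ennreal_leI pt)
  also have "\<dots> = ennreal (\<integral>z. g z \<partial>M)"
    by (intro nn_integral_eq_integral intg AE_I2 gnn)
  also have "(\<integral>z. g z \<partial>M) = exp (- a) * (1 + a)"
    using int1 int2 mean unfolding a_def c_def g_def power_mult_distrib
    by (simp add: Bochner_Integration.integral_add prob_space)
  also have "ennreal (exp (- a) * (1 + a)) \<le> 1"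
  proof -
    have "1 + a \<le> exp a" by (rule exp_ge_add_one_self)
    then have "exp (- a) * (1 + a) \<le> 1" by (simp add: exp_minus field_simps)
    then show ?thesis by simp
  qed
  finally show ?thesis unfolding c_def .
qed

lemma gauss_mix:
  fixes y v m :: real assumes y: "y > 0" and v: "v \<ge> 0"
  shows "(\<integral>\<^sup>+u. ennreal (normal_density 0 (1 / sqrt y) u * exp (u * m - u\<^sup>2 * v / 2)) \<partial>lborel)
       = ennreal (sqrt (y / (y + v)) * exp (m\<^sup>2 / (2 * (y + v))))"
proof -
  define w where "w = y + v"
  have w: "w > 0" using y v unfolding w_def by simp
  define C where "C = sqrt (y / w) * exp (m\<^sup>2 / (2 * w))"
  have C0: "C \<ge> 0" unfolding C_def using y w by simp
  have pt: "normal_density 0 (1 / sqrt y) u * exp (u * m - u\<^sup>2 * v / 2)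
      = C * normal_density (m / w) (1 / sqrt w) u" for u
  proof -
    have s1: "1 / sqrt (2 * pi * (1 / sqrt y)\<^sup>2) = sqrt y / sqrt (2 * pi)"
      using y by (simp add: real_sqrt_mult real_sqrt_divide field_simps)
    have s2: "1 / sqrt (2 * pi * (1 / sqrt w)\<^sup>2) = sqrt w / sqrt (2 * pi)"
      using w by (simp add: real_sqrt_mult real_sqrt_divide field_simps)
    have e1: "- (u - 0)\<^sup>2 / (2 * (1 / sqrt y)\<^sup>2) + (u * m - u\<^sup>2 * v / 2)
        = m\<^sup>2 / (2 * w) + (- (u - m / w)\<^sup>2 / (2 * (1 / sqrt w)\<^sup>2))"
    proof -
      have a: "(1 / sqrt y)\<^sup>2 = 1 / y" "(1 / sqrt w)\<^sup>2 = 1 / w" using y w by (simp_all add: power_divide)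
      have vw: "v = w - y" unfolding w_def by simp
      show ?thesis unfolding a vw using y w by (simp add: power2_eq_square field_simps)
    qed
    have "normal_density 0 (1 / sqrt y) u * exp (u * m - u\<^sup>2 * v / 2)
       = sqrt y / sqrt (2 * pi) * exp (- (u - 0)\<^sup>2 / (2 * (1 / sqrt y)\<^sup>2) + (u * m - u\<^sup>2 * v / 2))"
      unfolding normal_density_def s1 exp_add by simp
    also have "\<dots> = sqrt y / sqrt (2 * pi) * (exp (m\<^sup>2 / (2 * w)) * exp (- (u - m / w)\<^sup>2 / (2 * (1 / sqrt w)\<^sup>2)))"
      unfolding e1 exp_add ..
    also have "sqrt y / sqrt (2 * pi) = sqrt (y / w) * (sqrt w / sqrt (2 * pi))"
      using w by (simp add: real_sqrt_divide)
    finally show ?thesis unfolding C_def normal_density_def s2 by (simp add: ac_simps)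
  qed
  have "(\<integral>\<^sup>+u. ennreal (normal_density 0 (1 / sqrt y) u * exp (u * m - u\<^sup>2 * v / 2)) \<partial>lborel)
      = (\<integral>\<^sup>+u. ennreal C * ennreal (normal_density (m / w) (1 / sqrt w) u) \<partial>lborel)"
    unfolding pt using C0 by (simp add: ennreal_mult)
  also have "\<dots> = ennreal C * (\<integral>\<^sup>+u. ennreal (normal_density (m / w) (1 / sqrt w) u) \<partial>lborel)"
    by (rule nn_integral_cmult) simp
  also have "(\<integral>\<^sup>+u. ennreal (normal_density (m / w) (1 / sqrt w) u) \<partial>lborel) = 1"
  proof -
    have p: "0 < 1 / sqrt w" using w by simp
    show ?thesis using integrable_normal_density[OF p] integral_normal_density[OF p]
      by (subst nn_integral_eq_integral) auto
  qed
  finally show ?thesis unfolding C_def w_def by simp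
qed

lemma gauss_prior: assumes y: "y > 0" shows "(\<integral>\<^sup>+u. ennreal (normal_density 0 (1 / sqrt y) u) \<partial>lborel) = 1"
proof -
  have p: "0 < 1 / sqrt y" using y by simp
  show ?thesis using integrable_normal_density[OF p] integral_normal_density[OF p]
    by (subst nn_integral_eq_integral) auto
qed

lemma xlnx_bound: "0 \<le> (R::real) \<Longrightarrow> R * max 0 (- ln R) \<le> 1"
proof (cases "R = 0")
  case False
  assume R: "0 \<le> R"
  then have Rp: "R > 0" using False by simp
  have "ln (1 / R) \<le> 1 / R - 1" using Rp by (intro ln_le_minus_one) simp
  then have "- ln R \<le> 1 / R - 1" using Rp by (simp add: ln_div)
  then have "R * (- ln R) \<le> R * (1 / R - 1)" using Rp by (intro mult_left_mono) auto
  also have "\<dots> = 1 - R" using Rp by (simp add: field_simps)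
  finally have "R * (- ln R) \<le> 1" using Rp by simp
  then show ?thesis using Rp by (cases "0 \<le> - ln R") (auto simp: max_def)
qed simp

lemma ennreal_plus4: "0 \<le> a \<Longrightarrow> 0 \<le> b \<Longrightarrow> 0 \<le> c \<Longrightarrow> 0 \<le> d \<Longrightarrow>
  ennreal (a + b + c + d) = ennreal a + ennreal b + ennreal c + ennreal d"
  by simp

lemma ennreal_plus3: "0 \<le> a \<Longrightarrow> 0 \<le> b \<Longrightarrow> 0 \<le> c \<Longrightarrow>
  ennreal (a + b + c) = ennreal a + ennreal b + ennreal c"
  by simp

lemma ennreal_plus2: "0 \<le> a \<Longrightarrow> 0 \<le> b \<Longrightarrow> ennreal (a + b) = ennreal a + ennreal b"
  by simp

lemma pac_step_real:
  fixes U B R x :: real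
  assumes R: "R > 0" and x: "x \<ge> 1"
  shows "U + max 0 (- ln R) \<le> B + max 0 (ln R) + exp (U - B) / (R * exp x) + (x - 1)"
proof -
  have e: "exp (U - B) / (R * exp x) = exp (U - B - ln R - x)"
  proof -
    have "exp ((U - B) - (ln R + x)) = exp (U - B) / exp (ln R + x)" by (rule exp_diff)
    also have "\<dots> = exp (U - B) / (R * exp x)" using R by (simp add: exp_add)
    finally show ?thesis by (simp add: algebra_simps)
  qed
  have "1 + (U - B - ln R - x) \<le> exp (U - B - ln R - x)" by (rule exp_ge_add_one_self)
  moreover have "max 0 (ln R) - max 0 (- ln R) = ln R" by (simp add: max_def)
  ultimately show ?thesis unfolding e by linarith
qed

lemma pac_step:
  fixes \<rho> p0 :: "'t measure" and U B :: "'t \<Rightarrow> real" and x :: real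
  assumes rho: "prob_space \<rho>" and p0: "prob_space p0" and sets[measurable_cong]: "sets \<rho> = sets p0"
    and KL: "KL_div \<rho> p0 \<noteq> \<infinity>"
    and U[measurable]: "U \<in> borel_measurable p0" and B[measurable]: "B \<in> borel_measurable p0"
    and U0: "\<And>t. t \<in> space p0 \<Longrightarrow> U t \<ge> 0" and B0: "\<And>t. t \<in> space p0 \<Longrightarrow> B t \<ge> 0"
    and G: "(\<integral>\<^sup>+t. ennreal (exp (U t - B t)) \<partial>p0) \<le> ennreal (exp x)"
    and x: "x \<ge> 1"
    and Bint: "integrable \<rho> B"
  shows "\<exists>av. (\<integral>\<^sup>+t. ennreal (U t) \<partial>\<rho>) = ennreal av \<and> 0 \<le> av \<and>
     av \<le> (\<integral>t. B t \<partial>\<rho>) + real_of_ereal (KL_div \<rho> p0) + x"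
proof -
  interpret p0: prob_space p0 by fact
  interpret rho: prob_space \<rho> by fact
  have sp: "space \<rho> = space p0" using sets by (rule sets_eq_imp_space_eq)
  have ac: "absolutely_continuous p0 \<rho>" using KL unfolding KL_div_def by (auto split: if_splits)
  define r where "r = RN_deriv p0 \<rho>"
  have r[measurable]: "r \<in> borel_measurable p0" unfolding r_def by simp
  have dens: "density p0 r = \<rho>" unfolding r_def by (rule p0.density_RN_deriv[OF ac sets])
  have nnint: "integral\<^sup>N \<rho> f = (\<integral>\<^sup>+t. r t * f t \<partial>p0)" if "f \<in> borel_measurable p0" for f
    unfolding r_def by (rule p0.RN_deriv_nn_integral[OF ac sets that])
  have fin: "AE t in p0. r t \<noteq> \<infinity>"
    unfolding r_def by (rule p0.RN_deriv_finite[OF _ ac sets]) (rule rho.sigma_finite_measure_axioms)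
  have AEr: "AE t in \<rho>. 0 < r t \<and> r t \<noteq> \<infinity>"
    unfolding dens[symmetric] using fin by (subst AE_density) (auto elim: AE_mp)
  define R where "R t = enn2real (r t)" for t
  have R[measurable]: "R \<in> borel_measurable p0" unfolding R_def by simp
  have R0: "R t \<ge> 0" for t unfolding R_def by simp
  define Pp where "Pp = (\<integral>\<^sup>+t. ennreal (max 0 (ln (R t))) \<partial>\<rho>)"
  define Nn where "Nn = (\<integral>\<^sup>+t. ennreal (max 0 (- ln (R t))) \<partial>\<rho>)"
  have KLeq: "KL_div \<rho> p0 = enn2ereal Pp - enn2ereal Nn"
    unfolding KL_div_def Pp_def Nn_def R_def r_def using ac by simp
  have "Nn = (\<integral>\<^sup>+t. r t * ennreal (max 0 (- ln (R t))) \<partial>p0)"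
    unfolding Nn_def by (rule nnint) simp
  also have "\<dots> \<le> (\<integral>\<^sup>+t. 1 \<partial>p0)"
  proof (rule nn_integral_mono_AE)
    show "AE t in p0. r t * ennreal (max 0 (- ln (R t))) \<le> 1"
      using fin
    proof (rule AE_mp, intro AE_I2 impI)
      fix t assume "r t \<noteq> \<infinity>"
      then have "r t = ennreal (R t)" unfolding R_def by (cases "r t") auto
      then have "r t * ennreal (max 0 (- ln (R t))) = ennreal (R t * max 0 (- ln (R t)))"
        using R0[of t] by (simp add: ennreal_mult)
      also have "\<dots> \<le> 1" using xlnx_bound[OF R0[of t]] by simp
      finally show "r t * ennreal (max 0 (- ln (R t))) \<le> 1" .
    qed
  qed
  also have "\<dots> = 1" by (simp add: p0.emeasure_space_1)
  finally have Nn1: "Nn \<le> 1" .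
  then obtain nv where nv: "Nn = ennreal nv" "0 \<le> nv" by (cases Nn) (auto simp: top_unique)
  have "Pp \<noteq> \<top>"
  proof
    assume "Pp = \<top>"
    then have "KL_div \<rho> p0 = \<infinity>" unfolding KLeq nv by simp
    then show False using KL by simp
  qed
  then obtain pv where pv: "Pp = ennreal pv" "0 \<le> pv" by (cases Pp) auto
  have KLr: "real_of_ereal (KL_div \<rho> p0) = pv - nv"
    unfolding KLeq nv pv using nv pv by simp
  define E where "E t = exp (U t - B t) / (R t * exp x)" for t
  have E[measurable]: "E \<in> borel_measurable p0" unfolding E_def by simp
  have pt: "AE t in \<rho>. ennreal (U t) + ennreal (max 0 (- ln (R t))) \<le>
        ennreal (B t) + ennreal (max 0 (ln (R t))) + ennreal (E t) + ennreal (x - 1)"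
    using AEr
  proof (rule AE_mp, intro AE_I2 impI)
    fix t assume t: "t \<in> space \<rho>" and rt: "0 < r t \<and> r t \<noteq> \<infinity>"
    then have Rp: "R t > 0" unfolding R_def by (cases "r t") auto
    have "U t + max 0 (- ln (R t)) \<le> B t + max 0 (ln (R t)) + E t + (x - 1)"
      unfolding E_def by (rule pac_step_real[OF Rp x])
    moreover have "E t \<ge> 0" unfolding E_def using Rp by simp
    ultimately show "ennreal (U t) + ennreal (max 0 (- ln (R t))) \<le>
        ennreal (B t) + ennreal (max 0 (ln (R t))) + ennreal (E t) + ennreal (x - 1)"
    proof -
      have tp: "t \<in> space p0" using t sp by simp
      have a: "ennreal (U t + max 0 (- ln (R t))) = ennreal (U t) + ennreal (max 0 (- ln (R t)))"
        by (rule ennreal_plus2) (simp_all add: U0[OF tp])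
      have b: "ennreal (B t + max 0 (ln (R t)) + E t + (x - 1)) =
          ennreal (B t) + ennreal (max 0 (ln (R t))) + ennreal (E t) + ennreal (x - 1)"
        by (rule ennreal_plus4) (simp_all add: B0[OF tp] \<open>E t \<ge> 0\<close> x)
      show ?thesis unfolding a[symmetric] b[symmetric] by (rule ennreal_leI) fact
    qed
  qed
  have "(\<integral>\<^sup>+t. ennreal (U t) \<partial>\<rho>) + Nn = (\<integral>\<^sup>+t. ennreal (U t) + ennreal (max 0 (- ln (R t))) \<partial>\<rho>)"
    unfolding Nn_def by (rule nn_integral_add[symmetric]) auto
  also have "\<dots> \<le> (\<integral>\<^sup>+t. ennreal (B t) + ennreal (max 0 (ln (R t))) + ennreal (E t) + ennreal (x - 1) \<partial>\<rho>)"
    by (rule nn_integral_mono_AE[OF pt])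
  also have "\<dots> = (\<integral>\<^sup>+t. ennreal (B t) \<partial>\<rho>) + Pp + (\<integral>\<^sup>+t. ennreal (E t) \<partial>\<rho>) + ennreal (x - 1)"
    unfolding Pp_def by (simp add: nn_integral_add rho.emeasure_space_1)
  also have "(\<integral>\<^sup>+t. ennreal (E t) \<partial>\<rho>) \<le> 1"
  proof -
    have "(\<integral>\<^sup>+t. ennreal (E t) \<partial>\<rho>) = (\<integral>\<^sup>+t. r t * ennreal (E t) \<partial>p0)"
      by (rule nnint) simp
    also have "\<dots> \<le> (\<integral>\<^sup>+t. ennreal (exp (U t - B t)) * ennreal (1 / exp x) \<partial>p0)"
    proof (rule nn_integral_mono_AE)
      show "AE t in p0. r t * ennreal (E t) \<le> ennreal (exp (U t - B t)) * ennreal (1 / exp x)"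
        using fin
      proof (rule AE_mp, intro AE_I2 impI)
        fix t assume "r t \<noteq> \<infinity>"
        then have rt: "r t = ennreal (R t)" unfolding R_def by (cases "r t") auto
        show "r t * ennreal (E t) \<le> ennreal (exp (U t - B t)) * ennreal (1 / exp x)"
        proof (cases "R t = 0")
          case True then show ?thesis unfolding rt by simp
        next
          case False
          then have Rp: "R t > 0" using R0[of t] by simp
          have "R t * E t = exp (U t - B t) * (1 / exp x)" unfolding E_def using Rp by simp
          then show ?thesis unfolding rt using Rp
            by (simp add: ennreal_mult[symmetric] E_def del: ennreal_mult)
        qed
      qed
    qed
    also have "\<dots> = (\<integral>\<^sup>+t. ennreal (exp (U t - B t)) \<partial>p0) * ennreal (1 / exp x)"
      by (rule nn_integral_multc) simp
    also have "\<dots> \<le> ennreal (exp x) * ennreal (1 / exp x)"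
      by (rule mult_right_mono[OF G]) simp
    also have "\<dots> = 1" by (simp add: ennreal_mult[symmetric] del: ennreal_mult)
    finally show ?thesis .
  qed
  finally have main: "(\<integral>\<^sup>+t. ennreal (U t) \<partial>\<rho>) + Nn \<le> (\<integral>\<^sup>+t. ennreal (B t) \<partial>\<rho>) + Pp + 1 + ennreal (x - 1)"
    by (simp add: add_mono)
  have Bi: "(\<integral>\<^sup>+t. ennreal (B t) \<partial>\<rho>) = ennreal (\<integral>t. B t \<partial>\<rho>)"
    using B0 sp by (intro nn_integral_eq_integral Bint AE_I2) auto
  define bv where "bv = (\<integral>t. B t \<partial>\<rho>)"
  have bv0: "bv \<ge> 0" unfolding bv_def using B0 sp by (intro integral_nonneg_AE AE_I2) auto
  have "(\<integral>\<^sup>+t. ennreal (U t) \<partial>\<rho>) + ennreal nv \<le> ennreal (bv + pv + x)"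
  proof -
    have "ennreal (bv + pv + 1 + (x - 1)) = ennreal (bv + pv) + ennreal 1 + ennreal (x - 1)"
      using bv0 pv x by (intro ennreal_plus3) auto
    then have "ennreal (bv + pv + x) = ennreal bv + ennreal pv + 1 + ennreal (x - 1)"
      using bv0 pv by (simp add: ennreal_plus add.assoc)
    then show ?thesis using main unfolding Bi nv pv bv_def[symmetric] by simp
  qed
  moreover obtain av where av: "(\<integral>\<^sup>+t. ennreal (U t) \<partial>\<rho>) = ennreal av" "0 \<le> av"
    using calculation by (cases "(\<integral>\<^sup>+t. ennreal (U t) \<partial>\<rho>)") (auto simp: top_unique)
  ultimately have "ennreal (av + nv) \<le> ennreal (bv + pv + x)" using nv by simp
  then have "av + nv \<le> bv + pv + x" using bv0 pv x by (subst (asm) ennreal_le_iff) auto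
  then show ?thesis unfolding KLr bv_def[symmetric] using av by (intro exI[of _ av]) auto
qed

lemma nn_integral_PiM_component:
  assumes D: "prob_space D" and k: "k < n" and g[measurable]: "g \<in> borel_measurable D"
  shows "(\<integral>\<^sup>+s. g (s k) \<partial>(PiM {..<n} (\<lambda>_. D))) = (\<integral>\<^sup>+z. g z \<partial>D)"
proof -
  have "distr (PiM {..<n} (\<lambda>_. D)) D (\<lambda>\<omega>. \<omega> k) = D"
    using D k by (intro distr_PiM_component) auto
  then have "(\<integral>\<^sup>+z. g z \<partial>D) = (\<integral>\<^sup>+z. g z \<partial>distr (PiM {..<n} (\<lambda>_. D)) D (\<lambda>\<omega>. \<omega> k))" by simp
  also have "\<dots> = (\<integral>\<^sup>+s. g (s k) \<partial>(PiM {..<n} (\<lambda>_. D)))"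
    using k by (intro nn_integral_distr) auto
  finally show ?thesis ..
qed

lemma Lhat_diff:
  assumes k: "k < n"
  shows "Lhat l n f th - Lhat l n (f(k := z)) th = (l th (f k) - l th z) / real n"
proof -
  have "(\<Sum>i<n. l th (f i)) = l th (f k) + (\<Sum>i\<in>{..<n} - {k}. l th (f i))"
    using k by (intro sum.remove) auto
  moreover have "(\<Sum>i<n. l th ((f(k := z)) i)) = l th z + (\<Sum>i\<in>{..<n} - {k}. l th (f i))"
    using k by (subst sum.remove[of _ k]) auto
  ultimately show ?thesis unfolding Lhat_def by (simp add: diff_divide_distrib[symmetric])
qed

locale cor_setup =
  fixes Z :: "'z measure" and \<Theta> :: "'t measure" and D :: "'z measure"
    and n :: nat and l :: "'t \<Rightarrow> 'z \<Rightarrow> real"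
  assumes n: "n \<ge> 1"
    and D: "prob_space D" and DZ: "sets D = sets Z"
    and l_meas: "(\<lambda>(th, z). l th z) \<in> borel_measurable (\<Theta> \<Otimes>\<^sub>M Z)"
    and l_nonneg: "\<And>th z. th \<in> space \<Theta> \<Longrightarrow> z \<in> space Z \<Longrightarrow> l th z \<ge> 0"
    and l_sq: "\<And>th. th \<in> space \<Theta> \<Longrightarrow> integrable D (\<lambda>z. (l th z)\<^sup>2)"
begin

abbreviation "S \<equiv> sample_law n D"

definition "Q th = (\<integral>z. (l th z)\<^sup>2 \<partial>D)"
definition "W th z = (l th z)\<^sup>2 - 2 * l th z * Lpop l D th + Q th"
definition "Mf th s = (\<Sum>k<n. (l th (s k) - Lpop l D th) / real n)"
definition "Vf th s = (\<Sum>k<n. W th (s k) / (real n)\<^sup>2)"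

lemma spD: "space D = space Z" using DZ by (rule sets_eq_imp_space_eq)

lemma lD[measurable]: "(\<lambda>(th, z). l th z) \<in> borel_measurable (\<Theta> \<Otimes>\<^sub>M D)"
  using l_meas by (simp add: measurable_def sets_pair_measure_cong[OF refl DZ] space_pair_measure spD)

lemma lD'[measurable]: "(\<lambda>p. l (fst p) (snd p)) \<in> borel_measurable (\<Theta> \<Otimes>\<^sub>M D)"
  using lD by (simp add: split_beta')

lemma l_th[measurable]: assumes th: "th \<in> space \<Theta>" shows "l th \<in> borel_measurable D"
proof -
  have "(\<lambda>z. (\<lambda>p. l (fst p) (snd p)) (Pair th z)) \<in> borel_measurable D"
    by (rule measurable_compose[OF measurable_Pair1'[OF th] lD'])
  then show ?thesis by (simp add: fst_conv snd_conv)
qed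

lemma l_int: assumes th: "th \<in> space \<Theta>" shows "integrable D (l th)"
proof -
  have "integrable D (\<lambda>z. l th z)"
    by (rule finite_measure.square_integrable_imp_integrable[OF prob_space.finite_measure[OF D] l_th[OF th] l_sq[OF th]])
  then show ?thesis by simp
qed

interpretation Dp: prob_space D by (rule D)

lemma L_meas[measurable]: "Lpop l D \<in> borel_measurable \<Theta>"
  unfolding Lpop_def by measurable

lemma Q_meas[measurable]: "Q \<in> borel_measurable \<Theta>"
  unfolding Q_def by measurable

lemma W_meas[measurable]: "(\<lambda>p. W (fst p) (snd p)) \<in> borel_measurable (\<Theta> \<Otimes>\<^sub>M D)"
  unfolding W_def by measurable

lemma l_nonneg': "th \<in> space \<Theta> \<Longrightarrow> z \<in> space D \<Longrightarrow> l th z \<ge> 0"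
  using l_nonneg spD by simp

lemma L_nonneg: "th \<in> space \<Theta> \<Longrightarrow> Lpop l D th \<ge> 0"
  unfolding Lpop_def using l_nonneg' by (intro integral_nonneg_AE AE_I2) auto

lemma W_int: assumes th: "th \<in> space \<Theta>"
  shows "(\<integral>z'. (a - l th z')\<^sup>2 \<partial>D) = a\<^sup>2 - 2 * a * Lpop l D th + Q th"
proof -
  have e: "(a - l th z')\<^sup>2 = a\<^sup>2 - 2 * a * l th z' + (l th z')\<^sup>2" for z'
    by (simp add: power2_eq_square algebra_simps)
  show ?thesis unfolding e using l_int[OF th] l_sq[OF th]
    by (simp add: Lpop_def Q_def Dp.prob_space)
qed

lemma W_eq: "th \<in> space \<Theta> \<Longrightarrow> W th z = (\<integral>z'. (l th z - l th z')\<^sup>2 \<partial>D)"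
  unfolding W_def using W_int by simp

lemma W_nonneg: "th \<in> space \<Theta> \<Longrightarrow> W th z \<ge> 0"
  unfolding W_eq by (intro integral_nonneg_AE AE_I2) simp

lemma Vf_nonneg: "th \<in> space \<Theta> \<Longrightarrow> Vf th s \<ge> 0"
  unfolding Vf_def using W_nonneg by (intro sum_nonneg divide_nonneg_pos) auto

lemma Mf_eq: "Lhat l n s th - Lpop l D th = Mf th s"
  using n unfolding Mf_def Lhat_def by (simp add: sum_subtractf sum_divide_distrib[symmetric] field_simps)

lemma Vcond_eq:
  assumes th: "th \<in> space \<Theta>" and s: "s \<in> space S"
  shows "Vcond l n D th s = ennreal (Vf th s)"
proof -
  have "Vcond l n D th s = (\<Sum>k<n. ennreal (W th (s k) / (real n)\<^sup>2))"
    unfolding Vcond_def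
  proof (rule sum.cong[OF refl])
    fix k assume k: "k \<in> {..<n}"
    have "(\<integral>\<^sup>+ s'. ennreal ((Lhat l n (\<lambda>i. if i \<le> k then s i else s' i) th -
              Lhat l n ((\<lambda>i. if i \<le> k then s i else s' i)(k := s' k)) th)\<^sup>2) \<partial>S)
        = (\<integral>\<^sup>+ s'. ennreal (((l th (s k) - l th (s' k)) / real n)\<^sup>2) \<partial>S)"
      using k by (simp add: Lhat_diff)
    also have "\<dots> = (\<integral>\<^sup>+ z. ennreal (((l th (s k) - l th z) / real n)\<^sup>2) \<partial>D)"
      using k th by (intro nn_integral_PiM_component[OF D]) auto
    also have "\<dots> = ennreal (\<integral> z. ((l th (s k) - l th z) / real n)\<^sup>2 \<partial>D)"
    proof (rule nn_integral_eq_integral)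
      have "integrable D (\<lambda>z. (l th (s k) - l th z)\<^sup>2)"
      proof -
        have e: "(l th (s k) - l th z')\<^sup>2 = (l th (s k))\<^sup>2 - 2 * l th (s k) * l th z' + (l th z')\<^sup>2" for z'
          by (simp add: power2_eq_square algebra_simps)
        show ?thesis unfolding e using l_int[OF th] l_sq[OF th] by simp
      qed
      then show "integrable D (\<lambda>z. ((l th (s k) - l th z) / real n)\<^sup>2)"
        by (simp add: power_divide)
    qed simp
    also have "(\<integral> z. ((l th (s k) - l th z) / real n)\<^sup>2 \<partial>D) = W th (s k) / (real n)\<^sup>2"
      unfolding W_eq[OF th] by (simp add: power_divide)
    finally show "(\<integral>\<^sup>+ s'. ennreal ((Lhat l n (\<lambda>i. if i \<le> k then s i else s' i) th -
              Lhat l n ((\<lambda>i. if i \<le> k then s i else s' i)(k := s' k)) th)\<^sup>2) \<partial>S)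
        = ennreal (W th (s k) / (real n)\<^sup>2)" .
  qed
  also have "\<dots> = ennreal (Vf th s)"
    unfolding Vf_def using W_nonneg[OF th] by (intro sum_ennreal) auto
  finally show ?thesis .
qed

end

context cor_setup
begin

interpretation Dp: prob_space D by (rule D)

lemma S_prob: "prob_space S"
  by (rule prob_space_PiM) (rule D)

lemma lk[measurable]: assumes k: "k < n"
  shows "(\<lambda>p. l (fst p) (snd p k)) \<in> borel_measurable (\<Theta> \<Otimes>\<^sub>M S)"
proof -
  have "(\<lambda>p. (fst p, snd p k)) \<in> measurable (\<Theta> \<Otimes>\<^sub>M S) (\<Theta> \<Otimes>\<^sub>M D)"
    by measurable (simp add: k)
  from measurable_compose[OF this lD'] show ?thesis by simp
qed

lemma Wk[measurable]: assumes k: "k < n"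
  shows "(\<lambda>p. W (fst p) (snd p k)) \<in> borel_measurable (\<Theta> \<Otimes>\<^sub>M S)"
proof -
  have "(\<lambda>p. (fst p, snd p k)) \<in> measurable (\<Theta> \<Otimes>\<^sub>M S) (\<Theta> \<Otimes>\<^sub>M D)"
    by measurable (simp add: k)
  from measurable_compose[OF this W_meas] show ?thesis by simp
qed

lemma Lfst[measurable]: "(\<lambda>p. Lpop l D (fst p)) \<in> borel_measurable (\<Theta> \<Otimes>\<^sub>M S)"
  by (rule measurable_compose[OF measurable_fst L_meas])

lemma Mf_meas[measurable]: "(\<lambda>p. Mf (fst p) (snd p)) \<in> borel_measurable (\<Theta> \<Otimes>\<^sub>M S)"
  unfolding Mf_def
  by (intro borel_measurable_sum borel_measurable_divide borel_measurable_diff lk Lfst borel_measurable_const) auto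

lemma Vf_meas[measurable]: "(\<lambda>p. Vf (fst p) (snd p)) \<in> borel_measurable (\<Theta> \<Otimes>\<^sub>M S)"
  unfolding Vf_def
  by (intro borel_measurable_sum borel_measurable_divide Wk borel_measurable_const) auto

lemma Mf_th[measurable]: "th \<in> space \<Theta> \<Longrightarrow> Mf th \<in> borel_measurable S"
  using measurable_compose[OF measurable_Pair1'[of th \<Theta> S] Mf_meas] by (simp add: fst_conv snd_conv)

lemma Vf_th[measurable]: "th \<in> space \<Theta> \<Longrightarrow> Vf th \<in> borel_measurable S"
  using measurable_compose[OF measurable_Pair1'[of th \<Theta> S] Vf_meas] by (simp add: fst_conv snd_conv)

lemma mart:
  assumes th: "th \<in> space \<Theta>"
  shows "(\<integral>\<^sup>+s. ennreal (exp (u * Mf th s - u\<^sup>2 * Vf th s / 2)) \<partial>S) \<le> 1"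
proof -
  define f where "f z = (l th z - Lpop l D th) / real n" for z
  define c where "c = (\<integral>z. (f z)\<^sup>2 \<partial>D)"
  have nz: "real n \<noteq> 0" using n by simp
  have f_meas[measurable]: "f \<in> borel_measurable D" unfolding f_def using th by measurable
  have int1: "integrable D f" unfolding f_def
    by (intro Bochner_Integration.integrable_divide Bochner_Integration.integrable_diff l_int[OF th] Dp.integrable_const)
  have fsq: "(f z)\<^sup>2 = (Lpop l D th - l th z)\<^sup>2 / (real n)\<^sup>2" for z
    unfolding f_def by (simp add: power_divide power2_commute)
  have int2: "integrable D (\<lambda>z. (f z)\<^sup>2)"
  proof -
    have e: "(Lpop l D th - l th z')\<^sup>2 = (Lpop l D th)\<^sup>2 - 2 * Lpop l D th * l th z' + (l th z')\<^sup>2" for z'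
      by (simp add: power2_eq_square algebra_simps)
    show ?thesis unfolding fsq e using l_int[OF th] l_sq[OF th] by simp
  qed
  have mean: "(\<integral>z. f z \<partial>D) = 0"
    unfolding f_def using l_int[OF th] by (simp add: Lpop_def Dp.prob_space)
  have cval: "c = (Q th - (Lpop l D th)\<^sup>2) / (real n)\<^sup>2"
    unfolding c_def fsq using W_int[OF th, of "Lpop l D th"] by (simp add: power2_eq_square)
  have Wf: "W th z / (real n)\<^sup>2 = (f z)\<^sup>2 + c" for z
    unfolding cval fsq W_def using nz by (simp add: power2_eq_square field_simps)
  define g where "g z = exp (u * f z - u\<^sup>2 * ((f z)\<^sup>2 + c) / 2)" for z
  have g_meas[measurable]: "g \<in> borel_measurable D" unfolding g_def by measurable
  have pt: "exp (u * Mf th s - u\<^sup>2 * Vf th s / 2) = (\<Prod>k<n. g (s k))" for s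
  proof -
    have "u * Mf th s - u\<^sup>2 * Vf th s / 2 = (\<Sum>k<n. u * f (s k) - u\<^sup>2 * ((f (s k))\<^sup>2 + c) / 2)"
    proof -
      have v: "Vf th s = (\<Sum>k<n. (f (s k))\<^sup>2 + c)" unfolding Vf_def Wf ..
      have m: "Mf th s = (\<Sum>k<n. f (s k))" unfolding Mf_def f_def ..
      show ?thesis unfolding v m
        by (simp add: sum_subtractf sum_distrib_left sum_divide_distrib)
    qed
    then show ?thesis unfolding g_def by (simp add: exp_sum)
  qed
  interpret PSF: product_sigma_finite "\<lambda>_::nat. D"
    by (simp add: product_sigma_finite_def prob_space_imp_sigma_finite D)
  have "(\<integral>\<^sup>+s. ennreal (exp (u * Mf th s - u\<^sup>2 * Vf th s / 2)) \<partial>S) = (\<integral>\<^sup>+s. (\<Prod>k<n. ennreal (g (s k))) \<partial>S)"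
    unfolding pt by (simp add: prod_ennreal g_def)
  also have "\<dots> = (\<Prod>k<n. (\<integral>\<^sup>+z. ennreal (g z) \<partial>D))"
    by (rule PSF.product_nn_integral_prod) auto
  also have "\<dots> \<le> 1"
  proof (rule prod_le_1)
    fix k assume "k \<in> {..<n}"
    have "(\<integral>\<^sup>+z. ennreal (g z) \<partial>D) \<le> 1"
      unfolding g_def c_def using Dp.exp_mart_step[OF f_meas int1 int2 mean] .
    then show "0 \<le> (\<integral>\<^sup>+z. ennreal (g z) \<partial>D) \<and> (\<integral>\<^sup>+z. ennreal (g z) \<partial>D) \<le> 1" by simp
  qed
  finally show ?thesis .
qed

definition "G y th s = sqrt (y / (y + Vf th s)) * exp ((Mf th s)\<^sup>2 / (2 * (y + Vf th s)))"

lemma G_meas[measurable]: "(\<lambda>p. G y (fst p) (snd p)) \<in> borel_measurable (\<Theta> \<Otimes>\<^sub>M S)"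
  unfolding G_def by measurable

lemma mix:
  assumes th: "th \<in> space \<Theta>" and y: "y > 0"
  shows "(\<integral>\<^sup>+s. ennreal (G y th s) \<partial>S) \<le> 1"
proof -
  define N where "N u = normal_density 0 (1 / sqrt y) u" for u
  have pSF: "pair_sigma_finite lborel S"
    by (intro pair_sigma_finite.intro sigma_finite_lborel prob_space_imp_sigma_finite S_prob)
  have meas: "(\<lambda>(u, s). ennreal (N u * exp (u * Mf th s - u\<^sup>2 * Vf th s / 2))) \<in> borel_measurable (lborel \<Otimes>\<^sub>M S)"
    unfolding N_def using th by measurable
  have "(\<integral>\<^sup>+s. ennreal (G y th s) \<partial>S) = (\<integral>\<^sup>+s. (\<integral>\<^sup>+u. ennreal (N u * exp (u * Mf th s - u\<^sup>2 * Vf th s / 2)) \<partial>lborel) \<partial>S)"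
    unfolding N_def G_def using th y Vf_nonneg[OF th] by (intro nn_integral_cong) (simp add: gauss_mix)
  also have "\<dots> = (\<integral>\<^sup>+u. (\<integral>\<^sup>+s. ennreal (N u * exp (u * Mf th s - u\<^sup>2 * Vf th s / 2)) \<partial>S) \<partial>lborel)"
    by (rule pair_sigma_finite.Fubini'[OF pSF meas])
  also have "\<dots> = (\<integral>\<^sup>+u. ennreal (N u) * (\<integral>\<^sup>+s. ennreal (exp (u * Mf th s - u\<^sup>2 * Vf th s / 2)) \<partial>S) \<partial>lborel)"
    unfolding N_def using th by (intro nn_integral_cong) (simp add: ennreal_mult nn_integral_cmult[symmetric])
  also have "\<dots> \<le> (\<integral>\<^sup>+u. ennreal (N u) * 1 \<partial>lborel)"
    using mart[OF th] by (intro nn_integral_mono mult_left_mono) auto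
  also have "\<dots> = 1" unfolding N_def using gauss_prior[OF y] by simp
  finally show ?thesis .
qed

end

lemma opt_t:
  fixes X A B :: real
  assumes X: "0 \<le> X" and A: "0 \<le> A" and B: "0 < B" and H: "\<And>t. t > 0 \<Longrightarrow> X \<le> A / t + t * B / 2"
  shows "X \<le> sqrt (2 * A * B)"
proof (cases "A = 0")
  case True
  have "X = 0"
  proof (rule ccontr)
    assume "X \<noteq> 0"
    then have Xp: "X > 0" using X by simp
    have "X \<le> A / (X / B) + (X / B) * B / 2" using H[of "X / B"] Xp B by simp
    then have "X \<le> X / 2" using True B by simp
    then show False using Xp by simp
  qed
  then show ?thesis using True by simp
next
  case False
  then have Ap: "A > 0" using A by simp
  define s where "s = sqrt (2 * A / B)"
  have sp: "s > 0" unfolding s_def using Ap B by simp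
  have s2: "s\<^sup>2 = 2 * A / B" unfolding s_def using Ap B by simp
  have "A / s + s * B / 2 = (A + s\<^sup>2 * B / 2) / s" using sp by (simp add: field_simps power2_eq_square)
  also have "\<dots> = 2 * A / s" unfolding s2 using B by simp
  finally have e: "A / s + s * B / 2 = 2 * A / s" .
  have "(2 * A / s)\<^sup>2 = 2 * A * B"
    using sp Ap B s2 by (simp add: power_divide field_simps power2_eq_square)
  then have "sqrt (2 * A * B) = 2 * A / s" using sp Ap by (intro real_sqrt_unique) auto
  then show ?thesis using H[OF sp] e by simp
qed

lemma amgm_abs:
  fixes M w t :: real
  assumes w: "w > 0" and t: "t > 0"
  shows "\<bar>M\<bar> \<le> M\<^sup>2 / (2 * w) / t + t * w / 2"
proof -
  have "0 \<le> (\<bar>M\<bar> - t * w)\<^sup>2" by simp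
  also have "(\<bar>M\<bar> - t * w)\<^sup>2 = M\<^sup>2 - 2 * (t * w) * \<bar>M\<bar> + (t * w)\<^sup>2"
    by (simp add: power2_eq_square algebra_simps)
  finally have "2 * (t * w) * \<bar>M\<bar> \<le> M\<^sup>2 + (t * w)\<^sup>2" by simp
  then have "\<bar>M\<bar> \<le> (M\<^sup>2 + (t * w)\<^sup>2) / (2 * (t * w))"
    using w t by (simp add: field_simps)
  also have "\<dots> = M\<^sup>2 / (2 * w) / t + t * w / 2"
    using w t by (simp add: field_simps power2_eq_square)
  finally show ?thesis .
qed

lemma ln_tangent:
  fixes y v e :: real
  assumes y: "y > 0" and v: "v \<ge> 0" and e: "e \<ge> 0"
  shows "ln (1 + v / y) \<le> ln (1 + e / y) + (v - e) / (y + e)"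
proof -
  have a: "1 + v / y = (y + v) / y" "1 + e / y = (y + e) / y" using y by (simp_all add: field_simps)
  have "ln (1 + v / y) - ln (1 + e / y) = ln ((y + v) / (y + e))"
    unfolding a using y v e by (simp add: ln_div)
  also have "\<dots> \<le> (y + v) / (y + e) - 1" using y v e by (intro ln_le_minus_one) simp
  also have "\<dots> = (v - e) / (y + e)" using y e by (simp add: field_simps)
  finally show ?thesis by simp
qed

lemma exp_G:
  fixes y V U :: real
  assumes y: "y > 0" and V: "V \<ge> 0"
  shows "sqrt (y / (y + V)) * exp U = exp (U - ln (1 + V / y) / 2)"
proof -
  define z where "z = 1 + V / y"
  have zp: "z > 0" unfolding z_def using y V by (simp add: add_pos_nonneg)
  have "exp (ln z / 2) = sqrt z"
  proof -
    have "(exp (ln z / 2))\<^sup>2 = z" using zp by (simp add: power2_eq_square exp_add[symmetric])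
    then show ?thesis by (metis exp_ge_zero real_sqrt_unique)
  qed
  moreover have "sqrt (y / (y + V)) = 1 / sqrt z"
    unfolding z_def using y V by (simp add: field_simps real_sqrt_divide)
  ultimately show ?thesis unfolding z_def[symmetric] by (simp add: exp_diff)
qed

context cor_setup
begin

lemma Mf_s[measurable]: "s \<in> space S \<Longrightarrow> (\<lambda>th. Mf th s) \<in> borel_measurable \<Theta>"
  using measurable_compose[OF measurable_Pair2'[of s S \<Theta>] Mf_meas] by (simp add: fst_conv snd_conv)

lemma Vf_s[measurable]: "s \<in> space S \<Longrightarrow> (\<lambda>th. Vf th s) \<in> borel_measurable \<Theta>"
  using measurable_compose[OF measurable_Pair2'[of s S \<Theta>] Vf_meas] by (simp add: fst_conv snd_conv)

lemma det_bound:
  fixes \<rho> p0 :: "'t measure"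
  assumes y: "y > 0" and x: "x \<ge> 1" and s: "s \<in> space S"
    and rho: "prob_space \<rho>" and setsr: "sets \<rho> = sets \<Theta>"
    and p0: "prob_space p0" and setsp: "sets p0 = sets \<Theta>"
    and KL: "KL_div \<rho> p0 \<noteq> \<infinity>"
    and Vfin: "(\<integral>\<^sup>+ th. Vcond l n D th s \<partial>\<rho>) \<noteq> \<infinity>"
    and Zs: "(\<integral>\<^sup>+ th. ennreal (G y th s) \<partial>p0) \<le> ennreal (exp x)"
  shows "\<bar>\<integral> th. Lhat l n s th - Lpop l D th \<partial>\<rho>\<bar>
     \<le> sqrt (2 * (y + enn2real (\<integral>\<^sup>+ th. Vcond l n D th s \<partial>\<rho>)) *
          (real_of_ereal (KL_div \<rho> p0) + x + x / 2 * ln (1 + enn2real (\<integral>\<^sup>+ th. Vcond l n D th s \<partial>\<rho>) / y)))"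
proof -
  interpret rho: prob_space \<rho> by fact
  have spr: "space \<rho> = space \<Theta>" using setsr by (rule sets_eq_imp_space_eq)
  have spp: "space p0 = space \<Theta>" using setsp by (rule sets_eq_imp_space_eq)
  note [measurable_cong] = setsr setsp
  define EV where "EV = enn2real (\<integral>\<^sup>+ th. Vcond l n D th s \<partial>\<rho>)"
  define V where "V th = Vf th s" for th
  define M where "M th = Mf th s" for th
  define U where "U th = (M th)\<^sup>2 / (2 * (y + V th))" for th
  define B where "B th = ln (1 + V th / y) / 2" for th
  have V0: "th \<in> space \<Theta> \<Longrightarrow> V th \<ge> 0" for th unfolding V_def by (rule Vf_nonneg)
  have Vm[measurable]: "V \<in> borel_measurable \<Theta>" unfolding V_def using s by measurable
  have Mm[measurable]: "M \<in> borel_measurable \<Theta>" unfolding M_def using s by measurable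
  have Um[measurable]: "U \<in> borel_measurable \<Theta>" unfolding U_def by measurable
  have Bm[measurable]: "B \<in> borel_measurable \<Theta>" unfolding B_def by measurable
  have VV: "(\<integral>\<^sup>+ th. Vcond l n D th s \<partial>\<rho>) = (\<integral>\<^sup>+ th. ennreal (V th) \<partial>\<rho>)"
    unfolding V_def using s spr by (intro nn_integral_cong) (simp add: Vcond_eq)
  have EVV: "(\<integral>\<^sup>+ th. ennreal (V th) \<partial>\<rho>) = ennreal EV"
    unfolding EV_def VV[symmetric] using Vfin by (cases "(\<integral>\<^sup>+ th. Vcond l n D th s \<partial>\<rho>)") auto
  have EV0: "EV \<ge> 0" unfolding EV_def by simp
  have Vint: "integrable \<rho> V"
    using V0 spr by (intro integrableI_nn_integral_finite[OF _ _ EVV]) auto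
  have intV: "(\<integral>th. V th \<partial>\<rho>) = EV"
    using EVV V0 spr EV0 by (subst integral_eq_nn_integral) auto
  have B0: "th \<in> space \<Theta> \<Longrightarrow> B th \<ge> 0" for th unfolding B_def using V0 y by simp
  have BV: "th \<in> space \<Theta> \<Longrightarrow> B th \<le> V th / (2 * y)" for th
  proof -
    assume th: "th \<in> space \<Theta>"
    have "ln (1 + V th / y) \<le> V th / y" using V0[OF th] y by (intro ln_add_one_self_le_self) simp
    then show ?thesis unfolding B_def using y by (simp add: field_simps)
  qed
  have Bint: "integrable \<rho> B"
  proof (rule Bochner_Integration.integrable_bound)
    show "integrable \<rho> (\<lambda>th. V th / (2 * y))" using Vint by simp
    show "AE th in \<rho>. norm (B th) \<le> norm (V th / (2 * y))"
      using B0 BV V0 y spr by (intro AE_I2) auto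
  qed simp
  have U0: "th \<in> space \<Theta> \<Longrightarrow> U th \<ge> 0" for th unfolding U_def using V0[of th] y by simp
  have GUB: "th \<in> space \<Theta> \<Longrightarrow> G y th s = exp (U th - B th)" for th
    unfolding G_def U_def B_def M_def[symmetric] V_def[symmetric] using y V0 by (simp add: exp_G)
  have Zs': "(\<integral>\<^sup>+t. ennreal (exp (U t - B t)) \<partial>p0) \<le> ennreal (exp x)"
  proof -
    have "(\<integral>\<^sup>+t. ennreal (exp (U t - B t)) \<partial>p0) = (\<integral>\<^sup>+ th. ennreal (G y th s) \<partial>p0)"
      using spp GUB by (intro nn_integral_cong) simp
    then show ?thesis using Zs by simp
  qed
  have setsrp: "sets \<rho> = sets p0" using setsr setsp by simp
  have pac: "\<exists>av. (\<integral>\<^sup>+t. ennreal (U t) \<partial>\<rho>) = ennreal av \<and> 0 \<le> av \<and>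
     av \<le> (\<integral>t. B t \<partial>\<rho>) + real_of_ereal (KL_div \<rho> p0) + x"
    by (rule pac_step[OF rho p0 setsrp KL _ _ _ _ Zs' x Bint]) (use U0 B0 spp in auto)
  define KLr where "KLr = real_of_ereal (KL_div \<rho> p0)"
  obtain Uv where Uv: "(\<integral>\<^sup>+t. ennreal (U t) \<partial>\<rho>) = ennreal Uv" "0 \<le> Uv"
    and Uvb: "Uv \<le> (\<integral>t. B t \<partial>\<rho>) + KLr + x"
    using pac unfolding KLr_def by blast
  have Uint: "integrable \<rho> U"
    using U0 spr by (intro integrableI_nn_integral_finite[OF _ _ Uv(1)]) auto
  have intU: "(\<integral>t. U t \<partial>\<rho>) = Uv"
    using Uv U0 spr by (subst integral_eq_nn_integral) (auto simp: Uv(2))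
  have BI: "(\<integral>t. B t \<partial>\<rho>) \<le> ln (1 + EV / y) / 2"
  proof -
    have "(\<integral>t. B t \<partial>\<rho>) \<le> (\<integral>t. ln (1 + EV / y) / 2 + (V t - EV) / (2 * (y + EV)) \<partial>\<rho>)"
    proof (rule integral_mono[OF Bint])
      show "integrable \<rho> (\<lambda>t. ln (1 + EV / y) / 2 + (V t - EV) / (2 * (y + EV)))"
        using Vint by simp
      fix t assume "t \<in> space \<rho>"
      then have t: "t \<in> space \<Theta>" using spr by simp
      have "ln (1 + V t / y) \<le> ln (1 + EV / y) + (V t - EV) / (y + EV)"
        by (rule ln_tangent[OF y V0[OF t] EV0])
      then have "ln (1 + V t / y) / 2 \<le> (ln (1 + EV / y) + (V t - EV) / (y + EV)) / 2"
        by (rule divide_right_mono) simp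
      also have "\<dots> = ln (1 + EV / y) / 2 + (V t - EV) / (2 * (y + EV))"
        by (simp add: add_divide_distrib)
      finally show "B t \<le> ln (1 + EV / y) / 2 + (V t - EV) / (2 * (y + EV))"
        unfolding B_def .
    qed
    also have "\<dots> = ln (1 + EV / y) / 2"
      using Vint intV by (simp add: rho.prob_space diff_divide_distrib)
    finally show ?thesis .
  qed
  have Ubound: "Uv \<le> ln (1 + EV / y) / 2 + KLr + x"
    using Uvb BI by simp
  have Mbound: "t \<in> space \<Theta> \<Longrightarrow> \<bar>M t\<bar> \<le> U t / c + c * (y + V t) / 2" if c: "c > 0" for t c
    unfolding U_def using amgm_abs[of "y + V t" c "M t"] c y V0[of t] by simp
  have Mint: "integrable \<rho> M"
  proof (rule Bochner_Integration.integrable_bound)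
    show "integrable \<rho> (\<lambda>t. U t / 1 + 1 * (y + V t) / 2)" using Uint Vint by simp
    show "AE t in \<rho>. norm (M t) \<le> norm (U t / 1 + 1 * (y + V t) / 2)"
      using Mbound[of 1] U0 V0 y spr by (intro AE_I2) (auto simp: abs_of_nonneg add_nonneg_nonneg)
  qed simp
  have absint: "(\<integral>t. \<bar>M t\<bar> \<partial>\<rho>) \<le> Uv / c + c * (y + EV) / 2" if c: "c > 0" for c
  proof -
    have "(\<integral>t. \<bar>M t\<bar> \<partial>\<rho>) \<le> (\<integral>t. U t / c + c * (y + V t) / 2 \<partial>\<rho>)"
      using Mint Uint Vint Mbound[OF c] spr by (intro integral_mono) auto
    also have "\<dots> = Uv / c + c * (y + EV) / 2"
      using Uint Vint intU intV by (simp add: rho.prob_space add_divide_distrib distrib_left)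
    finally show ?thesis .
  qed
  have yEV: "y + EV > 0" using y EV0 by simp
  have ai: "(\<integral>t. \<bar>M t\<bar> \<partial>\<rho>) \<le> sqrt (2 * Uv * (y + EV))"
    by (rule opt_t[OF _ Uv(2) yEV absint]) auto
  have LM: "(\<integral> th. Lhat l n s th - Lpop l D th \<partial>\<rho>) = (\<integral> th. M th \<partial>\<rho>)"
    unfolding M_def Mf_eq ..
  have "\<bar>\<integral> th. Lhat l n s th - Lpop l D th \<partial>\<rho>\<bar> \<le> (\<integral>t. \<bar>M t\<bar> \<partial>\<rho>)"
    unfolding LM by (rule integral_abs_bound)
  also note ai
  also have "sqrt (2 * Uv * (y + EV)) \<le> sqrt (2 * (y + EV) * (KLr + x + x / 2 * ln (1 + EV / y)))"
  proof (rule real_sqrt_le_mono)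
    have ln0: "ln (1 + EV / y) \<ge> 0" using EV0 y by simp
    have "ln (1 + EV / y) / 2 \<le> x / 2 * ln (1 + EV / y)"
      using mult_right_mono[OF x ln0] by simp
    then have "Uv \<le> KLr + x + x / 2 * ln (1 + EV / y)" using Ubound by simp
    then show "2 * Uv * (y + EV) \<le> 2 * (y + EV) * (KLr + x + x / 2 * ln (1 + EV / y))"
      using yEV by (simp add: mult_left_mono mult.commute mult.left_commute)
  qed
  finally show ?thesis unfolding EV_def KLr_def .
qed

end

context cor_setup
begin

interpretation Dp: prob_space D by (rule D)
interpretation Sp: prob_space S by (rule S_prob)

lemma lks[measurable]: assumes k: "k < n" and s: "s \<in> space S"
  shows "(\<lambda>p. l (fst p) (s k)) \<in> borel_measurable (\<Theta> \<Otimes>\<^sub>M S)"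
proof -
  have sk: "s k \<in> space D" using s k by (auto simp: space_PiM)
  have "(\<lambda>p. (fst p, s k)) \<in> measurable (\<Theta> \<Otimes>\<^sub>M S) (\<Theta> \<Otimes>\<^sub>M D)"
    using sk by measurable
  from measurable_compose[OF this lD'] show ?thesis by simp
qed

lemma part2:
  assumes s: "s \<in> space S" and setsr: "sets \<rho> = sets \<Theta>"
  shows "(\<integral>\<^sup>+ th. Vcond l n D th s \<partial>\<rho>) \<le> ennreal (1 / (real n)\<^sup>2) *
     (\<integral>\<^sup>+ th. \<integral>\<^sup>+ s'. ennreal (\<Sum>k<n. (l th (s k))\<^sup>2 + (l th (s' k))\<^sup>2) \<partial>S \<partial>\<rho>)"
proof -
  have spr: "space \<rho> = space \<Theta>" using setsr by (rule sets_eq_imp_space_eq)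
  note [measurable_cong] = setsr
  define R where "R th = (\<integral>\<^sup>+ s'. ennreal (\<Sum>k<n. (l th (s k))\<^sup>2 + (l th (s' k))\<^sup>2) \<partial>S)" for th
  have Rm: "(\<lambda>p. ennreal (\<Sum>k<n. (l (fst p) (s k))\<^sup>2 + (l (fst p) (snd p k))\<^sup>2)) \<in> borel_measurable (\<Theta> \<Otimes>\<^sub>M S)"
    by (intro measurable_compose[OF _ measurable_ennreal] borel_measurable_sum borel_measurable_add
        borel_measurable_power lks[OF _ s] lk) auto
  have Rmeas: "R \<in> borel_measurable \<Theta>"
    unfolding R_def using Rm by (intro Sp.borel_measurable_nn_integral) (simp add: split_beta')
  have Rval: "R th = ennreal (\<Sum>k<n. (l th (s k))\<^sup>2 + Q th)" if th: "th \<in> space \<Theta>" for th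
  proof -
    have "R th = (\<integral>\<^sup>+ s'. (\<Sum>k<n. ennreal ((l th (s k))\<^sup>2) + ennreal ((l th (s' k))\<^sup>2)) \<partial>S)"
      unfolding R_def by (intro nn_integral_cong) (simp add: sum_ennreal[symmetric] ennreal_plus del: sum_ennreal)
    also have "\<dots> = (\<Sum>k<n. \<integral>\<^sup>+ s'. ennreal ((l th (s k))\<^sup>2) + ennreal ((l th (s' k))\<^sup>2) \<partial>S)"
      using th by (intro nn_integral_sum) auto
    also have "\<dots> = (\<Sum>k<n. ennreal ((l th (s k))\<^sup>2) + ennreal (Q th))"
    proof (rule sum.cong[OF refl])
      fix k assume k: "k \<in> {..<n}"
      have "(\<integral>\<^sup>+ s'. ennreal ((l th (s k))\<^sup>2) + ennreal ((l th (s' k))\<^sup>2) \<partial>S)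
          = ennreal ((l th (s k))\<^sup>2) + (\<integral>\<^sup>+ s'. ennreal ((l th (s' k))\<^sup>2) \<partial>S)"
        using th k by (subst nn_integral_add) (auto simp: Sp.emeasure_space_1)
      also have "(\<integral>\<^sup>+ s'. ennreal ((l th (s' k))\<^sup>2) \<partial>S) = (\<integral>\<^sup>+ z. ennreal ((l th z)\<^sup>2) \<partial>D)"
        using th k by (intro nn_integral_PiM_component[OF D]) auto
      also have "\<dots> = ennreal (Q th)"
        unfolding Q_def using l_sq[OF th] by (intro nn_integral_eq_integral) auto
      finally show "(\<integral>\<^sup>+ s'. ennreal ((l th (s k))\<^sup>2) + ennreal ((l th (s' k))\<^sup>2) \<partial>S)
          = ennreal ((l th (s k))\<^sup>2) + ennreal (Q th)" .
    qed
    also have "\<dots> = ennreal (\<Sum>k<n. (l th (s k))\<^sup>2 + Q th)"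
    proof -
      have Q0: "Q th \<ge> 0" unfolding Q_def by (intro integral_nonneg_AE AE_I2) simp
      then show ?thesis by (simp add: sum_ennreal[symmetric] ennreal_plus del: sum_ennreal)
    qed
    finally show ?thesis .
  qed
  have pt: "Vcond l n D th s \<le> ennreal (1 / (real n)\<^sup>2) * R th" if th: "th \<in> space \<Theta>" for th
  proof -
    have "Vf th s \<le> (\<Sum>k<n. (l th (s k))\<^sup>2 + Q th) * (1 / (real n)\<^sup>2)"
      unfolding Vf_def sum_distrib_right
    proof (rule sum_mono)
      fix k assume k: "k \<in> {..<n}"
      have sk: "s k \<in> space D" using s k by (auto simp: space_PiM)
      have "W th (s k) \<le> (l th (s k))\<^sup>2 + Q th"
        unfolding W_def using l_nonneg'[OF th sk] L_nonneg[OF th] by simp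
      then show "W th (s k) / (real n)\<^sup>2 \<le> ((l th (s k))\<^sup>2 + Q th) * (1 / (real n)\<^sup>2)"
        by (simp add: divide_right_mono)
    qed
    then have "ennreal (Vf th s) \<le> ennreal ((\<Sum>k<n. (l th (s k))\<^sup>2 + Q th) * (1 / (real n)\<^sup>2))"
      by (rule ennreal_leI)
    also have "\<dots> = ennreal (1 / (real n)\<^sup>2) * R th"
      unfolding Rval[OF th] by (subst ennreal_mult'[symmetric]) (simp_all add: mult.commute)
    finally show ?thesis using Vcond_eq[OF th s] by simp
  qed
  have "(\<integral>\<^sup>+ th. Vcond l n D th s \<partial>\<rho>) \<le> (\<integral>\<^sup>+ th. ennreal (1 / (real n)\<^sup>2) * R th \<partial>\<rho>)"
    using pt spr by (intro nn_integral_mono) auto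
  also have "\<dots> = ennreal (1 / (real n)\<^sup>2) * (\<integral>\<^sup>+ th. R th \<partial>\<rho>)"
    using Rmeas by (intro nn_integral_cmult) simp
  finally show ?thesis unfolding R_def .
qed

end

theorem corollary1:
  fixes Z :: "'z measure" and \<Theta> :: "'t measure" and D :: "'z measure"
    and n :: nat and l :: "'t \<Rightarrow> 'z \<Rightarrow> real"
    and phat :: "(nat \<Rightarrow> 'z) \<Rightarrow> 't measure" and p0 :: "'t measure"
  assumes n: "n \<ge> 1"
    and D: "prob_space D" "sets D = sets Z"
    and l_meas: "(\<lambda>(th, z). l th z) \<in> borel_measurable (\<Theta> \<Otimes>\<^sub>M Z)"
    and l_nonneg: "\<And>th z. th \<in> space \<Theta> \<Longrightarrow> z \<in> space Z \<Longrightarrow> l th z \<ge> 0"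
    and l_sq: "\<And>th. th \<in> space \<Theta> \<Longrightarrow> integrable D (\<lambda>z. (l th z)\<^sup>2)"
    and phat: "phat \<in> measurable (sample_law n D) (prob_algebra \<Theta>)"
    and p0: "prob_space p0" "sets p0 = sets \<Theta>"
    and finite_risk: "AE s in sample_law n D.
        (\<integral>\<^sup>+ th. ennreal (Lhat l n s th + Lpop l D th) \<partial>(phat s)) < \<infinity>"
  shows "(\<forall>y>0. \<forall>x\<ge>2. \<exists>A \<in> sets (sample_law n D).
            measure (sample_law n D) A \<ge> 1 - exp (- x) \<and>
            (\<forall>s\<in>A.
               (\<integral>\<^sup>+ th. Vcond l n D th s \<partial>(phat s)) \<noteq> \<infinity> \<longrightarrow>
               KL_div (phat s) p0 \<noteq> \<infinity> \<longrightarrow>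
               (let EV = enn2real (\<integral>\<^sup>+ th. Vcond l n D th s \<partial>(phat s)) in
                \<bar>\<integral> th. Lhat l n s th - Lpop l D th \<partial>(phat s)\<bar>
                  \<le> sqrt (2 * (y + EV) *
                       (real_of_ereal (KL_div (phat s) p0) + x + x / 2 * ln (1 + EV / y))))))
         \<and> (AE s in sample_law n D.
              (\<integral>\<^sup>+ th. Vcond l n D th s \<partial>(phat s))
                \<le> ennreal (1 / (real n)\<^sup>2) *
                  (\<integral>\<^sup>+ th. \<integral>\<^sup>+ s'. ennreal (\<Sum>k<n. (l th (s k))\<^sup>2 + (l th (s' k))\<^sup>2)
                      \<partial>(sample_law n D) \<partial>(phat s)))"
proof -
  interpret cs: cor_setup Z \<Theta> D n l
    by (rule cor_setup.intro[OF n D(1) D(2) l_meas l_nonneg l_sq])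
  interpret Sp: prob_space "sample_law n D" by (rule cs.S_prob)
  interpret P0: prob_space p0 by (rule p0(1))
  have phs: "sets (phat s) = sets \<Theta> \<and> prob_space (phat s)" if "s \<in> space (sample_law n D)" for s
    using measurable_space[OF phat that] by (simp add: space_prob_algebra)
  have spp: "space p0 = space \<Theta>" using p0(2) by (rule sets_eq_imp_space_eq)
  show ?thesis
  proof (intro conjI allI impI)
    fix y x :: real assume y: "y > 0" and x: "x \<ge> 2"
    define Zs where "Zs s = (\<integral>\<^sup>+ th. ennreal (cs.G y th s) \<partial>p0)" for s
    have Gm0: "(\<lambda>p. ennreal (cs.G y (fst p) (snd p))) \<in> borel_measurable (\<Theta> \<Otimes>\<^sub>M sample_law n D)"
      by (intro measurable_compose[OF cs.G_meas measurable_ennreal])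
    have Gm: "(\<lambda>p. ennreal (cs.G y (fst p) (snd p))) \<in> borel_measurable (p0 \<Otimes>\<^sub>M sample_law n D)"
      using Gm0 by (subst measurable_cong_sets[OF sets_pair_measure_cong[OF p0(2) refl] refl])
    have Gm': "(\<lambda>(s, th). ennreal (cs.G y th s)) \<in> borel_measurable (sample_law n D \<Otimes>\<^sub>M p0)"
      using Gm by (subst measurable_pair_swap_iff) (simp add: split_beta')
    have Zsm[measurable]: "Zs \<in> borel_measurable (sample_law n D)"
      unfolding Zs_def using Gm' by (intro P0.borel_measurable_nn_integral) simp
    have pSF: "pair_sigma_finite p0 (sample_law n D)"
      by (intro pair_sigma_finite.intro prob_space_imp_sigma_finite cs.S_prob p0(1))
    have intZ: "(\<integral>\<^sup>+ s. Zs s \<partial>sample_law n D) \<le> 1"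
    proof -
      have "(\<integral>\<^sup>+ s. Zs s \<partial>sample_law n D) = (\<integral>\<^sup>+ th. (\<integral>\<^sup>+ s. ennreal (cs.G y th s) \<partial>sample_law n D) \<partial>p0)"
        unfolding Zs_def using Gm by (intro pair_sigma_finite.Fubini'[OF pSF]) (simp add: split_beta')
      also have "\<dots> \<le> (\<integral>\<^sup>+ th. 1 \<partial>p0)"
        using cs.mix[OF _ y] spp by (intro nn_integral_mono) auto
      also have "\<dots> = 1" by (simp add: P0.emeasure_space_1)
      finally show ?thesis .
    qed
    define A where "A = {s \<in> space (sample_law n D). Zs s \<le> ennreal (exp x)}"
    have A: "A \<in> sets (sample_law n D)" unfolding A_def by measurable
    have "emeasure (sample_law n D) (space (sample_law n D) - A)
        \<le> emeasure (sample_law n D) {s \<in> space (sample_law n D). 1 \<le> ennreal (exp (- x)) * Zs s}"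
    proof (rule emeasure_mono)
      show "space (sample_law n D) - A \<subseteq> {s \<in> space (sample_law n D). 1 \<le> ennreal (exp (- x)) * Zs s}"
      proof
        fix s assume "s \<in> space (sample_law n D) - A"
        then have s: "s \<in> space (sample_law n D)" and Zg: "ennreal (exp x) \<le> Zs s" unfolding A_def by auto
        have "1 = ennreal (exp (- x)) * ennreal (exp x)"
          by (simp add: ennreal_mult[symmetric] exp_minus del: ennreal_mult)
        also have "\<dots> \<le> ennreal (exp (- x)) * Zs s" by (rule mult_left_mono[OF Zg]) simp
        finally show "s \<in> {s \<in> space (sample_law n D). 1 \<le> ennreal (exp (- x)) * Zs s}" using s by simp
      qed
      show "{s \<in> space (sample_law n D). 1 \<le> ennreal (exp (- x)) * Zs s} \<in> sets (sample_law n D)"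
        by measurable
    qed
    also have "\<dots> \<le> ennreal (exp (- x)) * (\<integral>\<^sup>+ s. Zs s * indicator (space (sample_law n D)) s \<partial>sample_law n D)"
      by (rule nn_integral_Markov_inequality) auto
    also have "(\<integral>\<^sup>+ s. Zs s * indicator (space (sample_law n D)) s \<partial>sample_law n D) = (\<integral>\<^sup>+ s. Zs s \<partial>sample_law n D)"
      by (intro nn_integral_cong) simp
    also have "ennreal (exp (- x)) * (\<integral>\<^sup>+ s. Zs s \<partial>sample_law n D) \<le> ennreal (exp (- x)) * 1"
      by (rule mult_left_mono[OF intZ]) simp
    finally have "emeasure (sample_law n D) (space (sample_law n D) - A) \<le> ennreal (exp (- x))" by simp
    then have mc: "measure (sample_law n D) (space (sample_law n D) - A) \<le> exp (- x)"
      by (simp add: Sp.emeasure_eq_measure)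
    have mA: "measure (sample_law n D) A \<ge> 1 - exp (- x)"
      using mc Sp.prob_compl[OF A] by simp
    show "\<exists>A \<in> sets (sample_law n D).
            measure (sample_law n D) A \<ge> 1 - exp (- x) \<and>
            (\<forall>s\<in>A.
               (\<integral>\<^sup>+ th. Vcond l n D th s \<partial>(phat s)) \<noteq> \<infinity> \<longrightarrow>
               KL_div (phat s) p0 \<noteq> \<infinity> \<longrightarrow>
               (let EV = enn2real (\<integral>\<^sup>+ th. Vcond l n D th s \<partial>(phat s)) in
                \<bar>\<integral> th. Lhat l n s th - Lpop l D th \<partial>(phat s)\<bar>
                  \<le> sqrt (2 * (y + EV) *
                       (real_of_ereal (KL_div (phat s) p0) + x + x / 2 * ln (1 + EV / y)))))"
    proof (intro bexI[OF _ A] conjI mA ballI impI)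
      fix s assume sA: "s \<in> A"
        and Vfin: "(\<integral>\<^sup>+ th. Vcond l n D th s \<partial>(phat s)) \<noteq> \<infinity>"
        and KL: "KL_div (phat s) p0 \<noteq> \<infinity>"
      have s: "s \<in> space (sample_law n D)" and Zs: "Zs s \<le> ennreal (exp x)" using sA unfolding A_def by auto
      have x1: "x \<ge> 1" using x by simp
      show "let EV = enn2real (\<integral>\<^sup>+ th. Vcond l n D th s \<partial>(phat s)) in
                \<bar>\<integral> th. Lhat l n s th - Lpop l D th \<partial>(phat s)\<bar>
                  \<le> sqrt (2 * (y + EV) *
                       (real_of_ereal (KL_div (phat s) p0) + x + x / 2 * ln (1 + EV / y)))"
        unfolding Let_def
        using cs.det_bound[OF y x1 s conjunct2[OF phs[OF s]] conjunct1[OF phs[OF s]] p0(1) p0(2) KL Vfin]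
          Zs unfolding Zs_def by simp
    qed
  next
    show "AE s in sample_law n D.
              (\<integral>\<^sup>+ th. Vcond l n D th s \<partial>(phat s))
                \<le> ennreal (1 / (real n)\<^sup>2) *
                  (\<integral>\<^sup>+ th. \<integral>\<^sup>+ s'. ennreal (\<Sum>k<n. (l th (s k))\<^sup>2 + (l th (s' k))\<^sup>2)
                      \<partial>(sample_law n D) \<partial>(phat s))"
      by (intro AE_I2 cs.part2 conjunct1[OF phs])
  qed
qed

end
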